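(* There is an absolute constant $c>0$ such that for every $m\ge 3$ and every $n$ that is a multiple of $m-1$ with $n\ge 2(m-1)$, there is a preference profile with $n$ agents and $m$ alternatives on which Plurality Veto (with any processing order of the agents) has utilitarian distortion at least $c\,n/m$. In particular, the utilitarian distortion of Plurality Veto is $\Omega(n/m)$.
   Context: Setting: $\mathcal N$ is a set of $n$ agents and $\mathcal A$ a set of $m$ alternatives. Each agent $i$ has a strict ranking $\sigma_i$ of $\mathcal A$; $r_i(X)$ is the position of $X$ in $\sigma_i$ (1 = top) and $X\succ_i Y$ means $r_i(X)<r_i(Y)$. The plurality score $\mathrm{plu}(X,\vec\sigma)$ is the number of agents ranking $X$ first. A (randomized) voting rule maps each profile $\vec\sigma=(\sigma_1,\dots,\sigma_n)$ to a probability distribution over $\mathcal A$; it is deterministic if it always outputs a point mass. Utilitarian framework: each agent has $u_i:\mathcal A\to\mathbb R_{\ge 0}$ with $\sum_{X}u_i(X)=1$; the utility profile $\vec u$ is consistent with $\vec\sigma$ if $X\succ_i Y\Rightarrow u_i(X)\ge u_i(Y)$. $\mathrm{SW}(X,\vec u)=\sum_i u_i(X)$. The utilitarian distortion of a distribution $p$ on $\vec u$ is $\max_X \mathrm{SW}(X,\vec u)/\mathbb E_{X\sim p}[\mathrm{SW}(X,\vec u)]$; the utilitarian distortion of a rule $f$ on $\vec\sigma$ is the supremum of this over all $\vec u$ consistent with $\vec\sigma$, and the utilitarian distortion of $f$ is the maximum over all profiles. Plurality Veto: initialize $\mathrm{score}(X)=\mathrm{plu}(X,\vec\sigma)$ for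 every $X$, and let $S$ be the set of alternatives with positive score. Process the agents one by one in some fixed order; when agent $i$ is processed, let $Y$ be the alternative in $S$ that $i$ ranks lowest, decrease $\mathrm{score}(Y)$ by one, and remove $Y$ from $S$ if its score becomes $0$. Output the alternative removed from $S$ last (at the final step). *)

theory Defs
  imports "HOL-Analysis.Analysis"
begin

text \<open>Agents are 0,...,n-1 and alternatives are 0,...,m-1.  A profile is given by
  rank functions: r i X is the position of alternative X in agent i's ranking
  (1 = top).\<close>

definition is_profile :: "nat \<Rightarrow> nat \<Rightarrow> (nat \<Rightarrow> nat \<Rightarrow> nat) \<Rightarrow> bool" where
  "is_profile n m r \<longleftrightarrow> (\<forall>i<n. bij_betw (r i) {..<m} {1..m})"

definition plu :: "nat \<Rightarrow> (nat \<Rightarrow> nat \<Rightarrow> nat) \<Rightarrow> nat \<Rightarrow> nat" where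
  "plu n r X = card {i. i < n \<and> r i X = 1}"

text \<open>One pass of Plurality Veto: the current scores, the remaining agents in
  processing order, and the alternative removed at the last processed step.
  When agent i is processed, Y is the alternative of S = {X<m. score X > 0}
  that i ranks lowest (largest position).\<close>

fun pv_run :: "nat \<Rightarrow> (nat \<Rightarrow> nat \<Rightarrow> nat) \<Rightarrow> (nat \<Rightarrow> nat) \<Rightarrow> nat list \<Rightarrow> nat \<Rightarrow> nat" where
  "pv_run m r score [] lastY = lastY"
| "pv_run m r score (i # is) lastY =
     (let Y = arg_max (r i) (\<lambda>X. X < m \<and> 0 < score X)
      in pv_run m r (score(Y := score Y - 1)) is Y)"

definition plurality_veto :: "nat \<Rightarrow> nat \<Rightarrow> (nat \<Rightarrow> nat \<Rightarrow> nat) \<Rightarrow> nat list \<Rightarrow> nat" where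
  "plurality_veto n m r ord = pv_run m r (plu n r) ord undefined"

definition is_order :: "nat \<Rightarrow> nat list \<Rightarrow> bool" where
  "is_order n ord \<longleftrightarrow> distinct ord \<and> set ord = {..<n}"

definition consistent :: "nat \<Rightarrow> nat \<Rightarrow> (nat \<Rightarrow> nat \<Rightarrow> nat) \<Rightarrow> (nat \<Rightarrow> nat \<Rightarrow> real) \<Rightarrow> bool" where
  "consistent n m r u \<longleftrightarrow>
     (\<forall>i<n. (\<forall>X<m. 0 \<le> u i X) \<and> (\<Sum>X<m. u i X) = 1 \<and>
            (\<forall>X<m. \<forall>Y<m. r i X < r i Y \<longrightarrow> u i Y \<le> u i X))"

definition SW :: "nat \<Rightarrow> (nat \<Rightarrow> nat \<Rightarrow> real) \<Rightarrow> nat \<Rightarrow> real" where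
  "SW n u X = (\<Sum>i<n. u i X)"

definition ratio :: "nat \<Rightarrow> nat \<Rightarrow> (nat \<Rightarrow> nat \<Rightarrow> real) \<Rightarrow> nat \<Rightarrow> ereal" where
  "ratio n m u W = (if SW n u W = 0 then \<infinity>
                    else ereal ((MAX X\<in>{..<m}. SW n u X) / SW n u W))"

definition distortion :: "nat \<Rightarrow> nat \<Rightarrow> (nat \<Rightarrow> nat \<Rightarrow> nat) \<Rightarrow> nat \<Rightarrow> ereal" where
  "distortion n m r W = (SUP u \<in> {u. consistent n m r u}. ratio n m u W)"

end

theory Submission
  imports Defs
begin

lemma am_eq:
  fixes f :: "'a \<Rightarrow> nat"
  assumes "P y" "\<And>x. P x \<Longrightarrow> x \<noteq> y \<Longrightarrow> f x < f y"
  shows "arg_max f P = y"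
  apply (rule arg_maxI[where P=P and f=f and x=y])
  using assms by force+

definition agtyp :: "nat \<Rightarrow> nat \<Rightarrow> nat" where
  "agtyp n i = (if i = 0 then 2 else if i < 3 then 3 else if i < 3 + (n-2) div 2 then 0 else 1)"

definition pos :: "nat \<Rightarrow> nat \<Rightarrow> nat" where
  "pos t X = (if X \<ge> 3 then X+1 else if t = 0 then (if X=1 then 1 else if X=0 then 2 else 3)
     else if t=1 then (if X=2 then 1 else if X=0 then 2 else 3) else if t=2 then X+1
     else (if X=0 then 1 else if X=2 then 2 else 3))"

definition vet :: "nat \<Rightarrow> (nat \<Rightarrow> nat) \<Rightarrow> nat" where
  "vet t s = (if t = 0 then (if s 2 > 0 then 2 else if s 0 > 0 then 0 else 1)
     else if t=1 then (if s 1>0 then 1 else if s 0 > 0 then 0 else 2)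
     else if t = 2 then (if s 2>0 then 2 else if s 1>0 then 1 else 0)
     else (if s 1 > 0 then 1 else if s 2>0 then 2 else 0))"

lemma agtyp_lt: "agtyp n i < 4" by (simp add: agtyp_def)

lemma vet_ok:
  assumes "\<forall>X\<ge>3. s X = 0" "3 \<le> m" "t < 4" "0 < s 0 \<or> 0 < s 1 \<or> 0 < s 2"
  shows "arg_max (pos t) (\<lambda>X. X < m \<and> 0 < s X) = vet t s"
proof (rule am_eq)
  have lt: "X < 3" if "0 < s X" for X using assms(1) that by (metis not_less less_irrefl)
  show "vet t s < m \<and> 0 < s (vet t s)" using assms by (auto simp: vet_def)
  fix X assume "X < m \<and> 0 < s X" "X \<noteq> vet t s"
  then have "X < 3" "0 < s X" "X \<noteq> vet t s" using lt by auto
  moreover have "t = 0 \<or> t = 1 \<or> t = 2 \<or> t = 3" using assms(3) by auto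
  moreover have "X = 0 \<or> X = 1 \<or> X = 2" using \<open>X < 3\<close> by auto
  ultimately show "pos t X < pos t (vet t s)"
    by (elim disjE) (simp_all add: vet_def pos_def split: if_splits)
qed

definition cnt :: "nat \<Rightarrow> nat \<Rightarrow> nat list \<Rightarrow> nat" where
  "cnt n k is = length (filter (\<lambda>i. agtyp n i = k) is)"

lemma cnt_cons: "cnt n k (i # is) = cnt n k is + (if agtyp n i = k then 1 else 0)"
  by (simp add: cnt_def)

definition INV :: "nat \<Rightarrow> (nat \<Rightarrow> nat) \<Rightarrow> nat list \<Rightarrow> bool" where
  "INV n s is \<longleftrightarrow> (\<forall>X\<ge>3. s X = 0) \<and> s 0 + s 1 + s 2 = length is \<and>
     (0 < s 1 \<longrightarrow> cnt n 0 is + cnt n 2 is + 1 \<le> s 2 + s 0) \<and>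
     (0 < s 2 \<longrightarrow> cnt n 1 is + cnt n 3 is + 1 \<le> s 1 + s 0) \<and>
     (is \<noteq> [] \<longrightarrow> 1 \<le> s 0)"

lemma INV_step:
  assumes "INV n s (i # is)" "Y = vet (agtyp n i) s"
  shows "INV n (s(Y := s Y - 1)) is"
proof -
  have t: "agtyp n i < 4" by (rule agtyp_lt)
  have "agtyp n i = 0 \<or> agtyp n i = 1 \<or> agtyp n i = 2 \<or> agtyp n i = 3" using t by auto
  then show ?thesis using assms
    unfolding INV_def
    by (elim disjE) (auto simp: cnt_cons vet_def Suc_le_eq split: if_splits)
qed

lemma dyn:
  assumes "3 \<le> m" "INV n s xs" "xs \<noteq> []"
  shows "pv_run m (\<lambda>i. pos (agtyp n i)) s xs y = 0"
  using assms(2,3)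
proof (induction xs arbitrary: s y)
  case Nil then show ?case by simp
next
  case (Cons i xs)
  have I: "(\<forall>X\<ge>3. s X = 0)" "s 0 + s 1 + s 2 = length (i # xs)" "1 \<le> s 0"
    using Cons.prems unfolding INV_def by auto
  have Y: "arg_max (pos (agtyp n i)) (\<lambda>X. X < m \<and> 0 < s X) = vet (agtyp n i) s"
    using vet_ok[of s m "agtyp n i"] I assms(1) agtyp_lt by auto
  show ?case
  proof (cases "xs = []")
    case True
    then have "s 1 = 0" "s 2 = 0" using I by auto
    then have "vet (agtyp n i) s = 0" using I(3) by (simp add: vet_def)
    then show ?thesis using True Y by simp
  next
    case False
    have "INV n (s(vet (agtyp n i) s := s (vet (agtyp n i) s) - 1)) xs"
      using INV_step[OF Cons.prems(1) refl] .
    then show ?thesis using Cons.IH[OF _ False] Y by (simp add: Let_def)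
  qed
qed


lemma pos1: "t < 4 \<Longrightarrow> pos t X = 1 \<longleftrightarrow> (X=0 \<and> 2 \<le> t) \<or> (X=1 \<and> t=0) \<or> (X=2 \<and> t=1)"
  unfolding pos_def by (cases "X < 3") (auto split: if_splits)

lemma sets:
  assumes "4 \<le> n"
  shows "{i. i < n \<and> agtyp n i = 0} = {3..<3 + (n-2) div 2}"
    "{i. i < n \<and> agtyp n i = 1} = {3 + (n-2) div 2..<n}"
    "{i. i < n \<and> agtyp n i = 2} = {0}"
    "{i. i < n \<and> agtyp n i = 3} = {1,2}"
    "{i. i < n \<and> 2 \<le> agtyp n i} = {..<3}"
  using assms by (auto simp: agtyp_def)

lemma plus:
  assumes "4 \<le> n"
  shows "plu n (\<lambda>i. pos (agtyp n i)) 0 = 3"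
    "plu n (\<lambda>i. pos (agtyp n i)) 1 = (n-2) div 2"
    "plu n (\<lambda>i. pos (agtyp n i)) 2 = n - 3 - (n-2) div 2"
    "X \<ge> 3 \<Longrightarrow> plu n (\<lambda>i. pos (agtyp n i)) X = 0"
proof -
  show "plu n (\<lambda>i. pos (agtyp n i)) 0 = 3"
    proof -
    have "{i. i < n \<and> pos (agtyp n i) 0 = 1} = {i. i < n \<and> 2 \<le> agtyp n i}"
      using pos1[OF agtyp_lt] by auto
    then show ?thesis unfolding plu_def sets(5)[OF assms] by simp
  qed
  show "plu n (\<lambda>i. pos (agtyp n i)) 1 = (n-2) div 2"
    proof -
    have "{i. i < n \<and> pos (agtyp n i) 1 = 1} = {i. i < n \<and> agtyp n i = 0}"
      using pos1[OF agtyp_lt] by auto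
    then show ?thesis unfolding plu_def sets(1)[OF assms] by simp
  qed
  show "plu n (\<lambda>i. pos (agtyp n i)) 2 = n - 3 - (n-2) div 2"
    proof -
    have "{i. i < n \<and> pos (agtyp n i) 2 = 1} = {i. i < n \<and> agtyp n i = 1}"
      using pos1[OF agtyp_lt] by auto
    then show ?thesis unfolding plu_def sets(2)[OF assms] by simp
  qed
  show "X \<ge> 3 \<Longrightarrow> plu n (\<lambda>i. pos (agtyp n i)) X = 0"
    unfolding plu_def using pos1[OF agtyp_lt] by auto
qed

lemma cnts:
  assumes "4 \<le> n" "is_order n ord"
  shows "cnt n 0 ord = (n-2) div 2" "cnt n 1 ord = n - 3 - (n-2) div 2"
    "cnt n 2 ord = 1" "cnt n 3 ord = 2"
proof -
  have e: "cnt n k ord = card {i. i < n \<and> agtyp n i = k}" for k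
    using assms(2) unfolding cnt_def is_order_def
    by (simp add: distinct_length_filter) (metis Collect_conj_eq Int_commute lessThan_def)
  show "cnt n 0 ord = (n-2) div 2" "cnt n 1 ord = n - 3 - (n-2) div 2"
    "cnt n 2 ord = 1" "cnt n 3 ord = 2"
    unfolding e sets[OF assms(1)] by auto
qed

lemma INV_init:
  assumes "4 \<le> n" "is_order n ord"
  shows "INV n (plu n (\<lambda>i. pos (agtyp n i))) ord"
proof -
  have l: "length ord = n" using assms(2) unfolding is_order_def
    using distinct_card[of ord] by simp
  define h where "h = (n-2) div 2"
  have h: "2 * h + 2 \<le> n" "n \<le> 2 * h + 3" "1 \<le> h" unfolding h_def using assms(1) by auto
  have ne: "ord \<noteq> []" using l assms(1) by auto
  show ?thesis unfolding INV_def plus[OF assms(1)] cnts[OF assms] l h_def[symmetric]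
  proof (intro conjI impI)
    show "\<forall>X\<ge>3. plu n (\<lambda>i. pos (agtyp n i)) X = 0" using plus(4)[OF assms(1)] by auto
    show "3 + h + (n - 3 - h) = n" using h by arith
    show "h + 1 + 1 \<le> n - 3 - h + 3" using h by arith
    show "n - 3 - h + 2 + 1 \<le> h + 3" using h by arith
    show "1 \<le> (3::nat)" by simp
  qed
qed

lemma winner:
  assumes "3 \<le> m" "4 \<le> n" "is_order n ord"
  shows "plurality_veto n m (\<lambda>i. pos (agtyp n i)) ord = 0"
proof -
  have "set ord = {..<n}" using assms(3) unfolding is_order_def by simp
  then have "0 \<in> set ord" using assms(2) by simp
  then have "ord \<noteq> []" by (cases ord) auto
  then show ?thesis unfolding plurality_veto_def by (rule dyn[OF assms(1) INV_init[OF assms(2,3)]])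
qed


lemma pos_ge1: "1 \<le> pos t X" by (simp add: pos_def)

lemma pos_small: "X < 3 \<Longrightarrow> pos t X \<le> 3" by (simp add: pos_def)
lemma pos_big: "3 \<le> X \<Longrightarrow> pos t X = X + 1" by (simp add: pos_def)

lemma pos_inj3:
  assumes "t < 4" "X < 3" "Y < 3" "pos t X = pos t Y"
  shows "X = Y"
proof -
  have t: "t = 0 \<or> t = 1 \<or> t = 2 \<or> t = 3" using assms(1) by auto
  have x: "X = 0 \<or> X = 1 \<or> X = 2" using assms(2) by auto
  have y: "Y = 0 \<or> Y = 1 \<or> Y = 2" using assms(3) by auto
  show ?thesis using t x y assms(4) by (elim disjE) (simp_all add: pos_def)
qed

lemma pos_bij:
  assumes "t < 4" "3 \<le> m"
  shows "bij_betw (pos t) {..<m} {1..m}"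
proof -
  have inj: "inj_on (pos t) {..<m}"
  proof (rule inj_onI)
    fix X Y assume "X \<in> {..<m}" "Y \<in> {..<m}" and e: "pos t X = pos t Y"
    show "X = Y"
    proof (cases "X < 3")
      case True
      show ?thesis
      proof (cases "Y < 3")
        case True2: True
        show ?thesis using pos_inj3[OF assms(1) True True2 e] .
      next
        case False
        then show ?thesis using e pos_small[OF True, of t] pos_big[of Y t] by simp
      qed
    next
      case False
      show ?thesis
      proof (cases "Y < 3")
        case True
        then show ?thesis using e pos_small[OF True, of t] pos_big[of X t] False by simp
      next
        case False2: False
        then show ?thesis using e pos_big[of X t] pos_big[of Y t] False by simp
      qed
    qed
  qed
  have sub: "pos t ` {..<m} \<subseteq> {1..m}"
  proof
    fix y assume "y \<in> pos t ` {..<m}"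
    then obtain X where X: "X < m" "y = pos t X" by auto
    have "pos t X \<le> m"
    proof (cases "X < 3")
      case True then show ?thesis using pos_small[OF True, of t] assms(2) by simp
    next
      case False then show ?thesis using pos_big[of X t] X(1) by simp
    qed
    then show "y \<in> {1..m}" using X pos_ge1[of t X] by simp
  qed
  have "card (pos t ` {..<m}) = card {1..m}" using card_image[OF inj] by simp
  then have "pos t ` {..<m} = {1..m}" using sub by (simp add: card_subset_eq)
  then show ?thesis using inj by (simp add: bij_betw_def)
qed

definition uu :: "nat \<Rightarrow> nat \<Rightarrow> nat \<Rightarrow> nat \<Rightarrow> real" where
  "uu n m i X = (if 2 \<le> agtyp n i then 1 / real m else if agtyp n i = 0 then (if X=1 then 1 else 0)
      else (if X=2 then 1 else 0))"

lemma uu_cons: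
  assumes "3 \<le> m"
  shows "consistent n m (\<lambda>i. pos (agtyp n i)) (uu n m)"
  unfolding consistent_def
proof (intro allI impI conjI)
  fix i X assume "i < n" "X < m"
  then show "0 \<le> uu n m i X" by (simp add: uu_def)
next
  fix i assume "i < n"
  show "(\<Sum>X<m. uu n m i X) = 1" using assms
    by (cases "2 \<le> agtyp n i"; cases "agtyp n i = 0") (simp_all add: uu_def)
next
  fix i X Y assume "i < n" "X < m" "Y < m" and lt: "pos (agtyp n i) X < pos (agtyp n i) Y"
  have ge: "1 \<le> pos (agtyp n i) X" by (rule pos_ge1)
  consider (a) "2 \<le> agtyp n i" | (b) "agtyp n i = 0" | (c) "agtyp n i = 1" by linarith
  then show "uu n m i Y \<le> uu n m i X"
  proof cases
    case a then show ?thesis by (simp add: uu_def)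
  next
    case b
    show ?thesis
    proof (cases "Y = 1")
      case True
      have "pos 0 1 = 1" by (simp add: pos_def)
      then show ?thesis using lt ge b True by simp
    next
      case False then show ?thesis using b by (simp add: uu_def)
    qed
  next
    case c
    show ?thesis
    proof (cases "Y = 2")
      case True
      have "pos 1 2 = 1" by (simp add: pos_def)
      then show ?thesis using lt ge c True by simp
    next
      case False then show ?thesis using c by (simp add: uu_def)
    qed
  qed
qed

lemma SW0:
  assumes "4 \<le> n"
  shows "SW n (uu n m) 0 = 3 / real m"
proof -
  have "(\<Sum>i<n. uu n m i 0) = (\<Sum>i<n. if i < 3 then 1 / real m else 0)"
    by (rule sum.cong) (auto simp: uu_def agtyp_def)
  also have "\<dots> = (\<Sum>i\<in>{..<n} \<inter> {i. i < 3}. 1 / real m)"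
    by (simp add: sum.If_cases)
  also have "{..<n} \<inter> {i. i < 3} = {..<3}" using assms by auto
  finally show ?thesis unfolding SW_def by simp
qed

lemma SW1:
  assumes "4 \<le> n"
  shows "real ((n-2) div 2) \<le> SW n (uu n m) 1"
proof -
  have "real ((n-2) div 2) = (\<Sum>i\<in>{3..<3 + (n-2) div 2}. uu n m i 1)"
    by (simp add: uu_def agtyp_def)
  also have "\<dots> \<le> (\<Sum>i<n. uu n m i 1)"
    by (rule sum_mono2) (use assms in \<open>auto simp: uu_def\<close>)
  finally show ?thesis unfolding SW_def .
qed

theorem mainTheorem1:
  shows "\<exists>c::real. c > 0 \<and>
    (\<forall>m n::nat. m \<ge> 3 \<and> (m - 1) dvd n \<and> n \<ge> 2 * (m - 1) \<longrightarrow>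
       (\<exists>r. is_profile n m r \<and>
          (\<forall>ord. is_order n ord \<longrightarrow>
             ereal (c * real n / real m) \<le> distortion n m r (plurality_veto n m r ord))))"
proof (intro exI[of _ "1/4"] conjI allI impI)
  fix m n :: nat
  assume a: "m \<ge> 3 \<and> (m - 1) dvd n \<and> n \<ge> 2 * (m - 1)"
  then have m3: "3 \<le> m" and n4: "4 \<le> n" by auto
  define r where "r = (\<lambda>i. pos (agtyp n i))"
  show "\<exists>r. is_profile n m r \<and> (\<forall>ord. is_order n ord \<longrightarrow>
             ereal (1/4 * real n / real m) \<le> distortion n m r (plurality_veto n m r ord))"
  proof (intro exI[of _ r] conjI allI impI)
    show "is_profile n m r" unfolding is_profile_def r_def using pos_bij agtyp_lt m3 by blast
  next
    fix ord assume o: "is_order n ord"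
    have w: "plurality_veto n m r ord = 0" unfolding r_def using winner[OF m3 n4 o] .
    define h where "h = (n-2) div 2"
    have h: "real n \<le> 2 * real h + 3" unfolding h_def using n4 by linarith
    have S0: "SW n (uu n m) 0 = 3 / real m" using SW0[OF n4] .
    have S1: "real h \<le> SW n (uu n m) 1" unfolding h_def using SW1[OF n4] .
    have MX: "SW n (uu n m) 1 \<le> (MAX X\<in>{..<m}. SW n u X)" if "u = uu n m" for u
      using m3 that by (intro Max_ge) auto
    have mpos: "0 < real m" using m3 by simp
    have rat: "ratio n m (uu n m) 0 = ereal ((MAX X\<in>{..<m}. SW n (uu n m) X) / (3 / real m))"
      unfolding ratio_def S0 using mpos by simp
    have key: "1/4 * real n / real m \<le> (MAX X\<in>{..<m}. SW n (uu n m) X) / (3 / real m)"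
    proof -
      let ?M = "MAX X\<in>{..<m}. SW n (uu n m) X"
      have M: "real h \<le> ?M" using S1 MX[OF refl] by linarith
      have "real n * 3 \<le> real n * real m" using m3 by (intro mult_left_mono) auto
      then have "1/4 * real n / real m \<le> real n / 12" using m3 by (simp add: field_simps)
      also have "\<dots> \<le> real h" using h n4 by linarith
      also have "\<dots> \<le> ?M" by (rule M)
      also have "?M \<le> ?M * (real m / 3)"
      proof -
        have "3 * ?M \<le> real m * ?M" using m3 M by (intro mult_right_mono) auto
        then show ?thesis by (simp add: field_simps)
      qed
      also have "\<dots> = ?M / (3 / real m)" by (simp add: field_simps)
      finally show ?thesis .
    qed
    have "ratio n m (uu n m) 0 \<le> distortion n m r 0"
      unfolding distortion_def r_def using uu_cons[OF m3] by (intro SUP_upper) auto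
    then show "ereal (1/4 * real n / real m) \<le> distortion n m r (plurality_veto n m r ord)"
      unfolding w rat using key by (meson ereal_less_eq(3) order_trans)
  qed
qed (simp)

end
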